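(* Let $\rho>0$. There is a constant $C>0$ such that for every $\varepsilon>0$ and every $\xi\in\mathbb{H}^N$ with $|\xi|>\rho$, $$|\nabla_{\mathbb{H}}u_\varepsilon(\xi)|\le C\varepsilon^{\frac{Q-2s}{2}}.$$
   Context: $\mathbb{H}^N=\mathbb{R}^{2N+1}$ with group law $\xi\circ\xi'=(x+x',y+y',t+t'+2(x'\cdot y-y'\cdot x))$, $Q=2N+2$, dilations $\delta_a(x,y,t)=(ax,ay,a^2t)$, homogeneous norm $|\xi|=((|x|^2+|y|^2)^2+t^2)^{1/4}$, balls $B_r(0)=\{|\xi|<r\}$, $s\in(0,1)$, $Q^*_s=\frac{2Q}{Q-2s}$. The horizontal gradient is $\nabla_{\mathbb{H}}u=(X_1u,\dots,X_Nu,Y_1u,\dots,Y_Nu)$ with $X_j=\partial_{x_j}+2y_j\partial_t$, $Y_j=\partial_{y_j}-2x_j\partial_t$. $S_s>0$ is the sharp fractional Sobolev constant on $\mathbb{H}^N$. $U(x,y,t)=C_0(t^2+(1+|x|^2+|y|^2)^2)^{-\frac{Q-2s}{4}}$ ($C_0>0$), $\overline{u}=U/\|U\|_{L^{Q^*_s}(\mathbb{H}^N)}$, $u^*(\xi)=\overline{u}(\delta_{S_s^{-1/(2s)}}(\xi))$, $U_\varepsilon(\xi)=\varepsilon^{-\frac{Q-2s}{2}}u^*(\delta_{1/\varepsilon}(\xi))$. $\Omega\subseteq\mathbb{H}^N$ is bounded open, $r>0$ with $B_{4r}(0)\subset\Omega$, $\phi\in C^\infty(\mathbb{H}^N)$,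 $0\le\phi\le1$, $\phi=1$ on $B_r(0)$, $\phi=0$ outside $B_{2r}(0)$, and $u_\varepsilon=U_\varepsilon\phi$. *)

theory Defs
  imports "HOL-Analysis.Analysis"
begin

text \<open>Heisenberg group H^N = R^{2N+1}, points (x,y,t) with x,y :: real^'n, N = CARD('n).\<close>

type_synonym 'n heis = "(real^'n) \<times> (real^'n) \<times> real"

definition hQ :: "'n::finite itself \<Rightarrow> real" where
  "hQ _ = 2 * real CARD('n) + 2"

definition hmult :: "'n::finite heis \<Rightarrow> 'n heis \<Rightarrow> 'n heis" where
  "hmult p q = (case p of (x,y,t) \<Rightarrow> case q of (x',y',t') \<Rightarrow>
      (x + x', y + y', t + t' + 2 * (x' \<bullet> y - y' \<bullet> x)))"

definition hinv :: "'n::finite heis \<Rightarrow> 'n heis" where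
  "hinv p = (case p of (x,y,t) \<Rightarrow> (-x, -y, -t))"

definition hdil :: "real \<Rightarrow> 'n::finite heis \<Rightarrow> 'n heis" where
  "hdil a p = (case p of (x,y,t) \<Rightarrow> (a *\<^sub>R x, a *\<^sub>R y, a^2 * t))"

definition hnorm :: "'n::finite heis \<Rightarrow> real" where
  "hnorm p = (case p of (x,y,t) \<Rightarrow> ((norm x ^ 2 + norm y ^ 2) ^ 2 + t ^ 2) powr (1/4))"

definition hball :: "real \<Rightarrow> 'n::finite heis set" where
  "hball r = {p. hnorm p < r}"

definition crit_exp :: "'n::finite itself \<Rightarrow> real \<Rightarrow> real" where
  "crit_exp n s = 2 * hQ n / (hQ n - 2 * s)"

definition Lp_norm :: "real \<Rightarrow> ('n::finite heis \<Rightarrow> real) \<Rightarrow> real" where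
  "Lp_norm p u = enn2real (\<integral>\<^sup>+ \<xi>. ennreal (\<bar>u \<xi>\<bar> powr p) \<partial>lborel) powr (1/p)"

definition gagliardo :: "real \<Rightarrow> ('n::finite heis \<Rightarrow> real) \<Rightarrow> ennreal" where
  "gagliardo s u = (\<integral>\<^sup>+ \<xi>. \<integral>\<^sup>+ \<eta>.
      ennreal ((u \<xi> - u \<eta>)^2 / hnorm (hmult (hinv \<eta>) \<xi>) powr (hQ TYPE('n) + 2 * s)) \<partial>lborel \<partial>lborel)"

definition sobolev_const :: "'n::finite itself \<Rightarrow> real \<Rightarrow> real" where
  "sobolev_const n s = Inf {enn2real (gagliardo s u) / (Lp_norm (crit_exp n s) u)^2 | u :: 'n heis \<Rightarrow> real.
      u \<in> borel_measurable lborel \<and> gagliardo s u < \<infinity> \<and>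
      (\<integral>\<^sup>+ \<xi>. ennreal (\<bar>u \<xi>\<bar> powr crit_exp n s) \<partial>lborel) < \<infinity> \<and>
      (\<integral>\<^sup>+ \<xi>. ennreal (\<bar>u \<xi>\<bar> powr crit_exp n s) \<partial>lborel) > 0}"

definition bubble_U :: "real \<Rightarrow> real \<Rightarrow> 'n::finite heis \<Rightarrow> real" where
  "bubble_U C0 s p = (case p of (x,y,t) \<Rightarrow>
      C0 * (t^2 + (1 + norm x ^ 2 + norm y ^ 2)^2) powr (- (hQ TYPE('n) - 2 * s) / 4))"

definition u_bar :: "real \<Rightarrow> real \<Rightarrow> 'n::finite heis \<Rightarrow> real" where
  "u_bar C0 s p = bubble_U C0 s p / Lp_norm (crit_exp TYPE('n) s) (bubble_U C0 s :: 'n heis \<Rightarrow> real)"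

definition u_star :: "real \<Rightarrow> real \<Rightarrow> 'n::finite heis \<Rightarrow> real" where
  "u_star C0 s p = u_bar C0 s (hdil (sobolev_const TYPE('n) s powr (- 1 / (2 * s))) p)"

definition U_eps :: "real \<Rightarrow> real \<Rightarrow> real \<Rightarrow> 'n::finite heis \<Rightarrow> real" where
  "U_eps C0 s \<epsilon> p = \<epsilon> powr (- (hQ TYPE('n) - 2 * s) / 2) * u_star C0 s (hdil (1/\<epsilon>) p)"

definition hX :: "'n::finite \<Rightarrow> ('n heis \<Rightarrow> real) \<Rightarrow> 'n heis \<Rightarrow> real" where
  "hX j u p = (case p of (x,y,t) \<Rightarrow>
      frechet_derivative u (at p) (axis j 1, 0, 2 * y $ j))"

definition hY :: "'n::finite \<Rightarrow> ('n heis \<Rightarrow> real) \<Rightarrow> 'n heis \<Rightarrow> real" where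
  "hY j u p = (case p of (x,y,t) \<Rightarrow>
      frechet_derivative u (at p) (0, axis j 1, - 2 * x $ j))"

definition hgrad_norm :: "('n::finite heis \<Rightarrow> real) \<Rightarrow> 'n heis \<Rightarrow> real" where
  "hgrad_norm u p = sqrt (\<Sum>j\<in>UNIV. (hX j u p)^2 + (hY j u p)^2)"

fun iter_deriv :: "'a::real_normed_vector list \<Rightarrow> ('a \<Rightarrow> real) \<Rightarrow> 'a \<Rightarrow> real" where
  "iter_deriv [] f = f"
| "iter_deriv (v # vs) f = (\<lambda>x. frechet_derivative (iter_deriv vs f) (at x) v)"

definition smooth_fun :: "('a::real_normed_vector \<Rightarrow> real) \<Rightarrow> bool" where
  "smooth_fun f \<longleftrightarrow> (\<forall>vs x. iter_deriv vs f differentiable (at x))"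

end

theory Submission
  imports Defs
begin

definition Dq :: "real \<Rightarrow> real \<Rightarrow> 'n::finite heis \<Rightarrow> real" where
  "Dq l e q = l^4 * (snd (snd q))^2 + (e^2 + l^2 * (fst q \<bullet> fst q + fst (snd q) \<bullet> fst (snd q)))^2"

lemma Dq_pos: "e > 0 \<Longrightarrow> Dq l e q > 0"
proof -
  assume e: "e > 0"
  have "e^2 + l^2 * (fst q \<bullet> fst q + fst (snd q) \<bullet> fst (snd q)) > 0"
    using e by (intro add_pos_nonneg) auto
  then show ?thesis unfolding Dq_def by (intro add_nonneg_pos) auto
qed

lemma powr_aux:
  assumes e: "e > (0::real)" and D: "D > 0"
  shows "(D / e^4) powr (-a/2) = D powr (-a/2) * e powr (2*a)"
proof -
  have 1: "(D / e^4) powr (-a/2) = D powr (-a/2) / (e^4) powr (-a/2)"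
    using e D by (meson powr_divide less_imp_le zero_less_power)
  have e4: "e^4 = e powr (real 4)" using powr_realpow[of e 4] e by (simp only: eq_commute)
  have 2: "(e^4) powr (-a/2) = e powr (real 4 * (-a/2))"
    unfolding e4 by (rule powr_powr)
  have 3: "real 4 * (-a/2) = -(2*a)" by simp
  have 4: "e powr (-(2*a)) = inverse (e powr (2*a))" by (rule powr_minus)
  show ?thesis unfolding 1 2 3 4 by (simp only: divide_inverse inverse_inverse_eq)
qed

lemma U_eps_eq:
  fixes q :: "'n::finite heis"
  assumes e: "e > 0" and S: "sobolev_const TYPE('n) s > 0"
  shows "U_eps C0 s e q = (C0 / Lp_norm (crit_exp TYPE('n) s) (bubble_U C0 s :: 'n heis \<Rightarrow> real))
     * e powr ((hQ TYPE('n) - 2 * s) / 2) * Dq (sobolev_const TYPE('n) s powr (- 1 / (2 * s))) e q powr (- ((hQ TYPE('n) - 2 * s) / 2) / 2)"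
proof -
  define l where "l = sobolev_const TYPE('n) s powr (- 1 / (2 * s))"
  define a where "a = (hQ TYPE('n) - 2 * s) / 2"
  define L where "L = Lp_norm (crit_exp TYPE('n) s) (bubble_U C0 s :: 'n heis \<Rightarrow> real)"
  obtain x y t where q: "q = (x,y,t)" by (cases q) auto
  have key: "((l\<^sup>2 * ((1 / e)\<^sup>2 * t))\<^sup>2 + (1 + (norm (l *\<^sub>R (1/e) *\<^sub>R x))\<^sup>2 + (norm (l *\<^sub>R (1/e) *\<^sub>R y))\<^sup>2)\<^sup>2)
     = Dq l e q / e^4"
  proof -
    have n: "(norm (l *\<^sub>R (1/e) *\<^sub>R v))\<^sup>2 = (l/e)\<^sup>2 * (v \<bullet> v)" for v :: "real^'n"
      by (simp add: power_mult_distrib power2_norm_eq_inner[symmetric] power_divide)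
    have g: "(l\<^sup>2*((1/e)\<^sup>2*t))\<^sup>2 + (1 + (l/e)\<^sup>2*A + (l/e)\<^sup>2*B)\<^sup>2 = (l^4*t\<^sup>2 + (e\<^sup>2+l\<^sup>2*(A+B))\<^sup>2)/e^4" for A B
      using e by (simp add: power_divide field_simps)
    show ?thesis unfolding n g unfolding q Dq_def by simp
  qed
  have "Dq l e q > 0" using Dq_pos e by blast
  have h: "hdil l (hdil (1/e) q) = (l *\<^sub>R (1/e) *\<^sub>R x, l *\<^sub>R (1/e) *\<^sub>R y, l\<^sup>2 * ((1 / e)\<^sup>2 * t))"
    by (simp add: hdil_def q)
  have ex: "- (hQ TYPE('n) - 2 * s) / 4 = -a/2" "- (hQ TYPE('n) - 2 * s) / 2 = -a" by (simp_all add: a_def field_simps)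
  have b: "bubble_U C0 s (X,Y,T) = C0 * (T^2 + (1+norm X^2+norm Y^2)^2) powr (-a/2)" for X Y :: "real^'n" and T
    unfolding bubble_U_def ex by simp
  have "U_eps C0 s e q = e powr (-a) * (C0 * (Dq l e q / e^4) powr (-a/2) / L)"
    unfolding U_eps_def u_star_def u_bar_def l_def[symmetric] L_def[symmetric] ex h b key[symmetric]
    by simp
  also have "\<dots> = C0 / L * (e powr (-a) * e powr (2*a)) * Dq l e q powr (-a/2)"
    unfolding powr_aux[OF e \<open>Dq l e q > 0\<close>, of a] by (simp only: divide_inverse ac_simps)
  also have "e powr (-a) * e powr (2*a) = e powr a"
    by (simp only: powr_add[symmetric]) simp
  finally show ?thesis by (simp only: l_def a_def L_def)
qed

definition dDq :: "real \<Rightarrow> real \<Rightarrow> 'n::finite heis \<Rightarrow> 'n heis \<Rightarrow> real" where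
  "dDq l e q h = 2*l^4* snd(snd q)* snd(snd h) + 2*(e^2 + l^2*(fst q \<bullet> fst q + fst (snd q) \<bullet> fst (snd q)))*l^2*(2*(fst q \<bullet> fst h) + 2*(fst (snd q) \<bullet> fst (snd h)))"

lemma Dq_deriv: "(Dq l e has_derivative dDq l e q) (at q)"
  unfolding Dq_def[abs_def] dDq_def[abs_def]
  by (auto intro!: derivative_eq_intros simp: algebra_simps inner_commute)

lemma F_deriv:
  assumes "e > 0"
  shows "((\<lambda>q. Dq l e q powr b) has_derivative (\<lambda>h. Dq l e q powr b * (dDq l e q h * b / Dq l e q))) (at q)"
proof -
  have "((\<lambda>q. Dq l e q powr (\<lambda>_. b) q) has_derivative (\<lambda>h. (Dq l e q powr (\<lambda>_. b) q) * ((\<lambda>_. 0) h * ln (Dq l e q) + dDq l e q h * (\<lambda>_. b) q / Dq l e q))) (at q within UNIV)"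
    by (rule has_derivative_powr[OF Dq_deriv has_derivative_const Dq_pos[OF assms]]) simp
  then show ?thesis by simp
qed


lemma real_bound:
  fixes l t E R xx yy w :: real
  assumes l: "l > 0" and D: "l^4*t\<^sup>2 + E\<^sup>2 = w^4" and E: "E \<ge> l\<^sup>2*R" and R: "R \<ge> 0"
    and xx: "xx\<^sup>2 \<le> R" and yy: "yy\<^sup>2 \<le> R" and w: "w \<ge> 0"
  shows "\<bar>4*l^4*t*yy + 4*l\<^sup>2*E*xx\<bar> \<le> 8*l*w^3"
    and "\<bar>- 4*l^4*t*xx + 4*l\<^sup>2*E*yy\<bar> \<le> 8*l*w^3"
proof -
  have E0: "E \<ge> 0" using E R l by (meson mult_nonneg_nonneg order_trans zero_le_power2)
  have t1: "l\<^sup>2*\<bar>t\<bar> \<le> w\<^sup>2"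
  proof (rule power2_le_imp_le)
    show "(l\<^sup>2*\<bar>t\<bar>)\<^sup>2 \<le> (w\<^sup>2)\<^sup>2" using D by (simp add: power_mult_distrib) (smt (verit) zero_le_power2)
  qed simp
  have E1: "E \<le> w\<^sup>2"
  proof (rule power2_le_imp_le)
    show "E\<^sup>2 \<le> (w\<^sup>2)\<^sup>2" using D l by (simp add: power_mult_distrib) (smt (verit) zero_le_power2 zero_le_mult_iff zero_less_power)
  qed simp
  have xb: "l*\<bar>z\<bar> \<le> w" if "z\<^sup>2 \<le> R" for z
  proof (rule power2_le_imp_le)
    have "l\<^sup>2 * z\<^sup>2 \<le> l\<^sup>2 * R" using that by (simp add: mult_left_mono)
    also have "\<dots> \<le> w\<^sup>2" using E E1 by linarith
    finally show "(l*\<bar>z\<bar>)\<^sup>2 \<le> w\<^sup>2" by (simp add: power_mult_distrib)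
  qed (use w in simp)
  have A: "\<bar>4*l^4*t*z\<bar> \<le> 4*l*w^3" if "z\<^sup>2 \<le> R" for z
  proof -
    have "\<bar>4*l^4*t*z\<bar> = 4*l*((l\<^sup>2*\<bar>t\<bar>)*(l*\<bar>z\<bar>))" using l by (simp add: abs_mult power_numeral_reduce power2_eq_square algebra_simps)
    also have "\<dots> \<le> 4*l*(w\<^sup>2*w)" using t1 xb[OF that] l by (intro mult_left_mono mult_mono) auto
    finally show ?thesis by (simp add: power_numeral_reduce power2_eq_square algebra_simps)
  qed
  have B: "\<bar>4*l\<^sup>2*E*z\<bar> \<le> 4*l*w^3" if "z\<^sup>2 \<le> R" for z
  proof -
    have "\<bar>4*l\<^sup>2*E*z\<bar> = 4*l*(E*(l*\<bar>z\<bar>))" using l E0 by (simp add: abs_mult power2_eq_square algebra_simps)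
    also have "\<dots> \<le> 4*l*(w\<^sup>2*w)" using E1 xb[OF that] l E0 by (intro mult_left_mono mult_mono) auto
    finally show ?thesis by (simp add: power_numeral_reduce power2_eq_square algebra_simps)
  qed
  show "\<bar>4*l^4*t*yy + 4*l\<^sup>2*E*xx\<bar> \<le> 8*l*w^3"
    using A[OF yy] B[OF xx] by linarith
  show "\<bar>- 4*l^4*t*xx + 4*l\<^sup>2*E*yy\<bar> \<le> 8*l*w^3"
    using A[OF xx] B[OF yy] by linarith
qed


lemma F_bounds:
  fixes p :: "'n::finite heis"
  assumes l: "l > 0" and e: "e > 0" and a: "a > 0" and \<rho>: "\<rho> > 0" and hp: "hnorm p > \<rho>"
  shows "Dq l e p powr (-a/2) \<le> (l^4*\<rho>^4) powr (-a/2)"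
    and "\<bar>Dq l e p powr (-a/2) * (dDq l e p (axis j 1, 0, 2 * fst (snd p) $ j) * (-a/2) / Dq l e p)\<bar> \<le> 4*a/\<rho>*(l^4*\<rho>^4) powr (-a/2)"
    and "\<bar>Dq l e p powr (-a/2) * (dDq l e p (0, axis j 1, - 2 * fst p $ j) * (-a/2) / Dq l e p)\<bar> \<le> 4*a/\<rho>*(l^4*\<rho>^4) powr (-a/2)"
proof -
  obtain x y t where p: "p = (x,y,t)" by (cases p) auto
  define R where "R = x \<bullet> x + y \<bullet> y"
  define H where "H = R\<^sup>2 + t\<^sup>2"
  define E where "E = e\<^sup>2 + l\<^sup>2 * R"
  define D where "D = Dq l e p"
  define BF where "BF = (l^4*\<rho>^4) powr (-a/2)"
  define F where "F = D powr (-a/2)"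
  have R0: "R \<ge> 0" unfolding R_def by simp
  have hn: "hnorm p = H powr (1/4)" unfolding hnorm_def p H_def R_def by (simp add: power2_norm_eq_inner)
  have H0: "H \<noteq> 0" using hp \<rho> hn by auto
  have Hge: "H \<ge> 0" unfolding H_def by simp
  have H4: "(H powr (1/4))^4 = H" using H0 Hge by (simp add: powr_power)
  have "\<rho>^4 < (H powr (1/4))^4" using hp hn \<rho> by (intro power_strict_mono) auto
  then have Hr: "\<rho>^4 < H" using H4 by simp
  have DE: "D = l^4*t\<^sup>2 + E\<^sup>2" unfolding D_def Dq_def E_def R_def p by simp
  have El: "E \<ge> l\<^sup>2 * R" unfolding E_def by simp
  have "E\<^sup>2 \<ge> (l\<^sup>2 * R)\<^sup>2" using El R0 by (intro power_mono) auto
  then have "D \<ge> l^4 * H" unfolding DE H_def by (simp add: power_mult_distrib algebra_simps)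
  moreover have "l^4 * H > l^4*\<rho>^4" using Hr l by simp
  ultimately have Dlow: "D > l^4*\<rho>^4" by linarith
  have lr: "l^4*\<rho>^4 > 0" using l \<rho> by simp
  have FB: "F \<le> BF" unfolding F_def BF_def using Dlow lr a by (intro powr_mono2') auto
  show "Dq l e p powr (-a/2) \<le> (l^4*\<rho>^4) powr (-a/2)" using FB unfolding F_def D_def BF_def .
  have F0: "F \<ge> 0" unfolding F_def by simp
  define w where "w = D powr (1/4)"
  have w0: "w \<ge> 0" unfolding w_def by simp
  have w4: "w^4 = D" unfolding w_def using Dlow lr by (simp add: powr_power)
  have "(l*\<rho>)^4 < w^4" using w4 Dlow by (simp add: power_mult_distrib)
  then have wl: "l*\<rho> < w" using w0 by (rule power_less_imp_less_base)
  have wpos: "w > 0" using wl l \<rho> by (smt (verit) mult_pos_pos)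
  have gen: "\<bar>F*(dv*(-a/2)/D)\<bar> \<le> 4*a/\<rho>*BF" if dv: "\<bar>dv\<bar> \<le> 8*l*w^3" for dv
  proof -
    have "\<bar>F*(dv*(-a/2)/D)\<bar> = F*(a/2)*\<bar>dv\<bar>/w^4" using F0 a w4 Dlow lr by (simp add: abs_mult abs_divide)
    also have "\<dots> \<le> F*(a/2)*(8*l*w^3)/w^4"
      using F0 a dv by (intro divide_right_mono mult_left_mono) auto
    also have "\<dots> = 4*a*l*F/w" using wpos by (simp add: power_numeral_reduce field_simps)
    also have "\<dots> \<le> 4*a*l*F/(l*\<rho>)" using wl l \<rho> a F0 wpos by (intro divide_left_mono) auto
    also have "\<dots> = 4*a/\<rho>*F" using l by simp
    also have "\<dots> \<le> 4*a/\<rho>*BF" using FB a \<rho> by (intro mult_left_mono) auto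
    finally show ?thesis .
  qed
  have xj: "(x$j)\<^sup>2 \<le> R" and yj: "(y$j)\<^sup>2 \<le> R"
  proof -
    have "(x$j)\<^sup>2 \<le> (norm x)\<^sup>2" using component_le_norm_cart[of x j] by (simp add: abs_le_square_iff[symmetric])
    then show "(x$j)\<^sup>2 \<le> R" unfolding R_def by (simp add: power2_norm_eq_inner) (smt (verit) inner_ge_zero)
    have "(y$j)\<^sup>2 \<le> (norm y)\<^sup>2" using component_le_norm_cart[of y j] by (simp add: abs_le_square_iff[symmetric])
    then show "(y$j)\<^sup>2 \<le> R" unfolding R_def by (simp add: power2_norm_eq_inner) (smt (verit) inner_ge_zero)
  qed
  note rb = real_bound[OF l DE[unfolded w4[symmetric], symmetric] El R0 xj yj w0]
  have dX: "dDq l e p (axis j 1, 0, 2 * fst (snd p) $ j) = 4*l^4*t*(y$j) + 4*l\<^sup>2*E*(x$j)"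
    unfolding dDq_def p E_def R_def by (simp add: inner_axis algebra_simps)
  have dY: "dDq l e p (0, axis j 1, - 2 * fst p $ j) = - 4*l^4*t*(x$j) + 4*l\<^sup>2*E*(y$j)"
    unfolding dDq_def p E_def R_def by (simp add: inner_axis algebra_simps)
  show "\<bar>Dq l e p powr (-a/2) * (dDq l e p (axis j 1, 0, 2 * fst (snd p) $ j) * (-a/2) / Dq l e p)\<bar> \<le> 4*a/\<rho>*(l^4*\<rho>^4) powr (-a/2)"
    using gen[OF rb(1)] unfolding dX F_def D_def BF_def .
  show "\<bar>Dq l e p powr (-a/2) * (dDq l e p (0, axis j 1, - 2 * fst p $ j) * (-a/2) / Dq l e p)\<bar> \<le> 4*a/\<rho>*(l^4*\<rho>^4) powr (-a/2)"
    using gen[OF rb(2)] unfolding dY F_def D_def BF_def .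
qed


lemma phi_deriv_bound:
  fixes \<phi> :: "'n::finite heis \<Rightarrow> real"
  assumes sm: "smooth_fun \<phi>" and r: "r > 0" and zero: "\<And>p. p \<notin> hball (2 * r) \<Longrightarrow> \<phi> p = 0"
  shows "\<exists>B\<ge>0. \<forall>p j. \<bar>frechet_derivative \<phi> (at p) (axis j 1, 0, 2 * fst (snd p) $ j)\<bar> \<le> B
                 \<and> \<bar>frechet_derivative \<phi> (at p) (0, axis j 1, - 2 * fst p $ j)\<bar> \<le> B"
proof -
  have diff: "\<phi> differentiable (at p)" for p
  proof -
    have "iter_deriv [] \<phi> differentiable (at p)" using sm unfolding smooth_fun_def by blast
    then show ?thesis by simp
  qed
  have lin: "linear (frechet_derivative \<phi> (at p))" for p
    using diff by (rule linear_frechet_derivative)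
  have cont: "continuous_on UNIV (\<lambda>p. frechet_derivative \<phi> (at p) w)" for w
  proof -
    have "(\<lambda>p. frechet_derivative \<phi> (at p) w) differentiable (at p)" for p
    proof -
      have "iter_deriv [w] \<phi> differentiable (at p)" using sm unfolding smooth_fun_def by blast
      then show ?thesis by simp
    qed
    then show ?thesis
      by (intro differentiable_imp_continuous_on) (auto simp: differentiable_on_def intro: differentiable_at_withinI)
  qed
  define gX where "gX j p = frechet_derivative \<phi> (at p) (axis j 1, 0, 0) + (2 * fst (snd p) $ j) * frechet_derivative \<phi> (at p) (0, 0, 1)" for j p
  define gY where "gY j p = frechet_derivative \<phi> (at p) (0, axis j 1, 0) + (- 2 * fst p $ j) * frechet_derivative \<phi> (at p) (0, 0, 1)" for j p
  have gX: "frechet_derivative \<phi> (at p) (axis j 1, 0, 2 * fst (snd p) $ j) = gX j p" for p j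
  proof -
    have "(axis j 1, 0, 2 * fst (snd p) $ j) = (axis j 1, 0, 0) + (2 * fst (snd p) $ j) *\<^sub>R ((0::real^'n), (0::real^'n), (1::real))"
      by simp
    then show ?thesis unfolding gX_def by (simp only: linear_add[OF lin] linear_scale[OF lin] real_scaleR_def)
  qed
  have gY: "frechet_derivative \<phi> (at p) (0, axis j 1, - 2 * fst p $ j) = gY j p" for p j
  proof -
    have "((0::real^'n), axis j 1, - 2 * fst p $ j) = (0, axis j 1, 0) + (- 2 * fst p $ j) *\<^sub>R ((0::real^'n), (0::real^'n), (1::real))"
      by simp
    then show ?thesis unfolding gY_def by (simp only: linear_add[OF lin] linear_scale[OF lin] real_scaleR_def)
  qed
  define G where "G p = (\<Sum>j\<in>UNIV. \<bar>gX j p\<bar> + \<bar>gY j p\<bar>)" for p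
  have Gc: "continuous_on UNIV G"
    unfolding G_def gX_def gY_def
    by (intro continuous_intros cont)
  define Rb where "Rb = sqrt (4*r\<^sup>2 + 16*r^4)"
  obtain B where B0: "B \<ge> 0" and B: "\<And>p. p \<in> cball 0 Rb \<Longrightarrow> norm (G p) \<le> B"
    using continuous_on_compact_bound[OF compact_cball continuous_on_subset[OF Gc subset_UNIV]] by blast
  define U where "U = {q::'n heis. (2*r)^4 < (fst q \<bullet> fst q + fst (snd q) \<bullet> fst (snd q))\<^sup>2 + (snd (snd q))\<^sup>2}"
  have Uo: "open U" unfolding U_def by (intro open_Collect_less continuous_intros)
  have Uz: "\<phi> q = 0" if "q \<in> U" for q
  proof (rule zero)
    obtain x y t where q: "q = (x,y,t)" by (cases q) auto
    define H where "H = (x \<bullet> x + y \<bullet> y)\<^sup>2 + t\<^sup>2"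
    have H: "(2*r)^4 < H" using that unfolding U_def H_def q by simp
    have hn: "hnorm q = H powr (1/4)" unfolding hnorm_def q H_def by (simp add: power2_norm_eq_inner)
    have H0: "H \<noteq> 0" "H \<ge> 0" using H r unfolding H_def by auto
    have H4: "(H powr (1/4))^4 = H" using H0 by (simp add: powr_power)
    show "q \<notin> hball (2 * r)"
    proof
      assume "q \<in> hball (2 * r)"
      then have "hnorm q < 2*r" by (simp add: hball_def)
      then have "(H powr (1/4))^4 < (2*r)^4" unfolding hn by (intro power_strict_mono) auto
      then show False using H H4 by simp
    qed
  qed
  have outside: "frechet_derivative \<phi> (at p) = (\<lambda>_. 0)" if "p \<notin> cball 0 Rb" for p
  proof -
    obtain x y t where p: "p = (x,y,t)" by (cases p) auto
    have "p \<in> U"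
    proof (rule ccontr)
      assume "p \<notin> U"
      then have H: "(x \<bullet> x + y \<bullet> y)\<^sup>2 + t\<^sup>2 \<le> (2*r)^4" unfolding U_def p by simp
      have S0: "x \<bullet> x + y \<bullet> y \<ge> 0" by simp
      have "(x \<bullet> x + y \<bullet> y)\<^sup>2 \<le> (4*r\<^sup>2)\<^sup>2" using H by (simp add: power_mult_distrib) (smt (verit) zero_le_power2)
      then have S: "x \<bullet> x + y \<bullet> y \<le> 4*r\<^sup>2" by (rule power2_le_imp_le) simp
      have T: "t\<^sup>2 \<le> 16*r^4" using H S0 by (simp add: power_mult_distrib) (smt (verit) zero_le_power2)
      have "(norm p)\<^sup>2 = x \<bullet> x + y \<bullet> y + t\<^sup>2" unfolding p by (simp add: norm_Pair power2_norm_eq_inner)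
      then have "(norm p)\<^sup>2 \<le> 4*r\<^sup>2 + 16*r^4" using S T by simp
      then have "norm p \<le> Rb" unfolding Rb_def by (simp add: real_le_rsqrt)
      then show False using that by simp
    qed
    have "(\<phi> has_derivative (\<lambda>_. 0)) (at p)"
      by (rule has_derivative_transform_within_open[OF has_derivative_const Uo \<open>p \<in> U\<close>]) (simp add: Uz)
    then show ?thesis by (metis frechet_derivative_at)
  qed
  show ?thesis
  proof (intro exI[of _ B] conjI allI B0)
    fix p j
    have "\<bar>gX j p\<bar> \<le> B \<and> \<bar>gY j p\<bar> \<le> B"
    proof (cases "p \<in> cball 0 Rb")
      case True
      have "\<bar>gX j p\<bar> + \<bar>gY j p\<bar> \<le> G p" unfolding G_def
        by (rule member_le_sum) auto
      moreover have "G p \<le> B" using B[OF True] by simp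
      ultimately show ?thesis by linarith
    next
      case False
      then show ?thesis unfolding gX_def gY_def outside[OF False] using B0 by simp
    qed
    then show "\<bar>frechet_derivative \<phi> (at p) (axis j 1, 0, 2 * fst (snd p) $ j)\<bar> \<le> B"
      "\<bar>frechet_derivative \<phi> (at p) (0, axis j 1, - 2 * fst p $ j)\<bar> \<le> B"
      unfolding gX gY by auto
  qed
qed

theorem lemma3p8:
  fixes s C0 r \<rho> :: real
    and \<Omega> :: "'n::finite heis set"
    and \<phi> :: "'n heis \<Rightarrow> real"
  assumes s: "0 < s" "s < 1"
    and SPos: "sobolev_const TYPE('n) s > 0"
    and C0: "C0 > 0"
    and \<Omega>: "open \<Omega>" "bounded \<Omega>"
    and r: "r > 0" "hball (4 * r) \<subseteq> \<Omega>"
    and \<phi>_smooth: "smooth_fun \<phi>"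
    and \<phi>_range: "\<And>p. 0 \<le> \<phi> p \<and> \<phi> p \<le> 1"
    and \<phi>_one: "\<And>p. p \<in> hball r \<Longrightarrow> \<phi> p = 1"
    and \<phi>_zero: "\<And>p. p \<notin> hball (2 * r) \<Longrightarrow> \<phi> p = 0"
    and \<rho>: "\<rho> > 0"
  shows "\<exists>C>0. \<forall>\<epsilon>>0. \<forall>p. hnorm p > \<rho> \<longrightarrow>
           hgrad_norm (\<lambda>q. U_eps C0 s \<epsilon> q * \<phi> q) p
             \<le> C * \<epsilon> powr ((hQ TYPE('n) - 2 * s) / 2)"
proof -
  define l where "l = sobolev_const TYPE('n) s powr (- 1 / (2 * s))"
  define a where "a = (hQ TYPE('n) - 2 * s) / 2"
  define K where "K = C0 / Lp_norm (crit_exp TYPE('n) s) (bubble_U C0 s :: 'n heis \<Rightarrow> real)"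
  have l: "l > 0" unfolding l_def using SPos by simp
  have a: "a > 0" unfolding a_def hQ_def using s by simp
  obtain B\<phi> where B\<phi>0: "B\<phi> \<ge> 0" and B\<phi>: "\<And>p j. \<bar>frechet_derivative \<phi> (at p) (axis j 1, 0, 2 * fst (snd p) $ j)\<bar> \<le> B\<phi>
                 \<and> \<bar>frechet_derivative \<phi> (at p) (0, axis j 1, - 2 * fst p $ j)\<bar> \<le> B\<phi>"
    using phi_deriv_bound[OF \<phi>_smooth r(1) \<phi>_zero] by blast
  define BF where "BF = (l^4*\<rho>^4) powr (-a/2)"
  define B0 where "B0 = BF * B\<phi> + 4*a/\<rho>*BF"
  have BF0: "BF \<ge> 0" unfolding BF_def by simp
  have B00: "B0 \<ge> 0" unfolding B0_def using BF0 B\<phi>0 a \<rho> by simp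
  define C where "C = sqrt (2 * real CARD('n)) * \<bar>K\<bar> * B0 + 1"
  have C0': "C > 0" unfolding C_def using B00 by (simp add: add_nonneg_pos)
  show ?thesis
  proof (intro exI[of _ C] conjI allI impI C0')
    fix \<epsilon> :: real and p :: "'n heis"
    assume e: "\<epsilon> > 0" and hp: "hnorm p > \<rho>"
    define c where "c = K * \<epsilon> powr a"
    define F where "F q = Dq l \<epsilon> q powr (-a/2)" for q :: "'n heis"
    define F' where "F' h = Dq l \<epsilon> p powr (-a/2) * (dDq l \<epsilon> p h * (-a/2) / Dq l \<epsilon> p)" for h :: "'n heis"
    define \<phi>' where "\<phi>' = frechet_derivative \<phi> (at p)"
    have ueq: "(\<lambda>q. U_eps C0 s \<epsilon> q * \<phi> q) = (\<lambda>q. c * (F q * \<phi> q))"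
    proof
      fix q
      show "U_eps C0 s \<epsilon> q * \<phi> q = c * (F q * \<phi> q)"
        unfolding U_eps_eq[OF e SPos] c_def F_def K_def[symmetric] l_def[symmetric] a_def[symmetric]
        by simp
    qed
    have \<phi>d: "(\<phi> has_derivative \<phi>') (at p)"
    proof -
      have "iter_deriv [] \<phi> differentiable (at p)" using \<phi>_smooth unfolding smooth_fun_def by blast
      then show ?thesis unfolding \<phi>'_def by (simp add: frechet_derivative_works[symmetric])
    qed
    have Fd: "(F has_derivative F') (at p)"
      unfolding F_def[abs_def] F'_def[abs_def] by (rule F_deriv[OF e])
    have ud: "((\<lambda>q. c * (F q * \<phi> q)) has_derivative (\<lambda>h. c * (F p * \<phi>' h + F' h * \<phi> p))) (at p)"
    proof -
      have "((\<lambda>q. F q * \<phi> q) has_derivative (\<lambda>h. F p * \<phi>' h + F' h * \<phi> p)) (at p)"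
        by (rule has_derivative_mult[OF Fd \<phi>d])
      then show ?thesis by (rule has_derivative_mult_right)
    qed
    have fd: "frechet_derivative (\<lambda>q. U_eps C0 s \<epsilon> q * \<phi> q) (at p) = (\<lambda>h. c * (F p * \<phi>' h + F' h * \<phi> p))"
      unfolding ueq using frechet_derivative_at[OF ud] by simp
    define M where "M = \<bar>c\<bar> * B0"
    have M0: "M \<ge> 0" unfolding M_def using B00 by simp
    have gen: "\<bar>c * (F p * \<phi>' h + F' h * \<phi> p)\<bar> \<le> M" if h1: "\<bar>\<phi>' h\<bar> \<le> B\<phi>" and h2: "\<bar>F' h\<bar> \<le> 4*a/\<rho>*BF" for h
    proof -
      have Fp: "F p \<le> BF" "F p \<ge> 0" unfolding F_def BF_def using F_bounds(1)[OF l e a \<rho> hp] by auto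
      have ph: "\<bar>\<phi> p\<bar> \<le> 1" using \<phi>_range[of p] by simp
      have "\<bar>F p * \<phi>' h + F' h * \<phi> p\<bar> \<le> \<bar>F p\<bar> * \<bar>\<phi>' h\<bar> + \<bar>F' h\<bar> * \<bar>\<phi> p\<bar>"
        by (metis abs_mult abs_triangle_ineq)
      also have "\<dots> \<le> BF * B\<phi> + 4*a/\<rho>*BF * 1"
        using Fp h1 h2 ph by (intro add_mono mult_mono) auto
      finally have "\<bar>F p * \<phi>' h + F' h * \<phi> p\<bar> \<le> B0" unfolding B0_def by simp
      then show ?thesis unfolding M_def abs_mult by (intro mult_left_mono) auto
    qed
    have hXb: "\<bar>hX j (\<lambda>q. U_eps C0 s \<epsilon> q * \<phi> q) p\<bar> \<le> M" for j
    proof -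
      have "hX j (\<lambda>q. U_eps C0 s \<epsilon> q * \<phi> q) p = frechet_derivative (\<lambda>q. U_eps C0 s \<epsilon> q * \<phi> q) (at p) (axis j 1, 0, 2 * fst (snd p) $ j)"
        by (cases p) (simp add: hX_def)
      then show ?thesis unfolding fd using gen B\<phi>[of p j] F_bounds(2)[OF l e a \<rho> hp, of j]
        unfolding \<phi>'_def F'_def BF_def by simp
    qed
    have hYb: "\<bar>hY j (\<lambda>q. U_eps C0 s \<epsilon> q * \<phi> q) p\<bar> \<le> M" for j
    proof -
      have "hY j (\<lambda>q. U_eps C0 s \<epsilon> q * \<phi> q) p = frechet_derivative (\<lambda>q. U_eps C0 s \<epsilon> q * \<phi> q) (at p) (0, axis j 1, - 2 * fst p $ j)"
        by (cases p) (simp add: hY_def)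
      then show ?thesis unfolding fd using gen B\<phi>[of p j] F_bounds(3)[OF l e a \<rho> hp, of j]
        unfolding \<phi>'_def F'_def BF_def by simp
    qed
    have sq: "x\<^sup>2 \<le> M\<^sup>2" if "\<bar>x\<bar> \<le> M" for x
      using that M0 by (simp add: abs_le_square_iff[symmetric])
    have "(\<Sum>j\<in>UNIV. (hX j (\<lambda>q. U_eps C0 s \<epsilon> q * \<phi> q) p)\<^sup>2 + (hY j (\<lambda>q. U_eps C0 s \<epsilon> q * \<phi> q) p)\<^sup>2)
          \<le> (\<Sum>j\<in>(UNIV::'n set). M\<^sup>2 + M\<^sup>2)"
      by (intro sum_mono add_mono sq hXb hYb)
    also have "\<dots> = (sqrt (2 * real CARD('n)) * M)\<^sup>2"
      by (simp add: power_mult_distrib)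
    finally have "hgrad_norm (\<lambda>q. U_eps C0 s \<epsilon> q * \<phi> q) p \<le> sqrt (2 * real CARD('n)) * M"
    proof -
      assume hs: "(\<Sum>j\<in>UNIV. (hX j (\<lambda>q. U_eps C0 s \<epsilon> q * \<phi> q) p)\<^sup>2 + (hY j (\<lambda>q. U_eps C0 s \<epsilon> q * \<phi> q) p)\<^sup>2)
          \<le> (sqrt (2 * real CARD('n)) * M)\<^sup>2"
      have "hgrad_norm (\<lambda>q. U_eps C0 s \<epsilon> q * \<phi> q) p \<le> sqrt ((sqrt (2 * real CARD('n)) * M)\<^sup>2)"
        unfolding hgrad_norm_def by (rule real_sqrt_le_mono[OF hs])
      also have "\<dots> = sqrt (2 * real CARD('n)) * M"
        by (rule real_sqrt_unique) (use M0 in auto)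
      finally show ?thesis .
    qed
    also have "\<dots> = sqrt (2 * real CARD('n)) * \<bar>K\<bar> * B0 * \<epsilon> powr a"
      unfolding M_def c_def by (simp add: abs_mult)
    also have "\<dots> \<le> C * \<epsilon> powr a"
      unfolding C_def by (simp add: distrib_right)
    finally show "hgrad_norm (\<lambda>q. U_eps C0 s \<epsilon> q * \<phi> q) p \<le> C * \<epsilon> powr ((hQ TYPE('n) - 2 * s) / 2)"
      unfolding a_def .
  qed
qed

end
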